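(* For every integer $N\ge2$, the polynomial $\Psi_N(X,Y,Z)$ is nonconstant as a polynomial in $Y$.
   Context: $\mathcal{H}=\{\tau\in\mathbb{C}:\operatorname{Im}\tau>0\}$, $q=e^{2\pi i\tau}$; $E_2=1-24\sum\sigma_1(n)q^n$, $E_4=1+240\sum\sigma_3(n)q^n$, $E_6=1-504\sum\sigma_5(n)q^n$; $\Delta=(E_4^3-E_6^2)/1728$, $j=E_4^3/\Delta$, $f=E_4E_6/\Delta$, $E_2^*(\tau)=E_2(\tau)-\frac{3}{\pi\operatorname{Im}\tau}$, $\chi^*=E_2^*f$. For $N\ge1$, $M_N$ denotes the set of primitive integer $2\times2$ matrices of determinant $N$ (acting by Möbius transformations), and $\Psi_N\in\mathbb{Q}[X,Y,Z]$ denotes a nonzero polynomial, irreducible over $\mathbb{C}$, such that $\Psi_N(\chi^*(g\tau),j(\tau),\chi^*(\tau))=0$ for all $g\in M_N$ and $\tau\in\mathcal H$ (constructed by writing the coefficients of $\prod_{g\in D_N}(X-\chi^*(g\tau))$, where $D_N=\{\begin{pmatrix}a&b\\0&d\end{pmatrix}:ad=N,\ 0\le b<d,\ \gcd(a,b,d)=1\}$, as rational functions of $j(\tau),\chi^*(\tau)$ and clearing denominators). *)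

theory Defs
  imports Complex_Main "HOL-Computational_Algebra.Computational_Algebra"
begin

definition sigma :: "nat \<Rightarrow> nat \<Rightarrow> nat" where
  "sigma k n = (\<Sum>d\<in>{d. d dvd n}. d ^ k)"

definition qnome :: "complex \<Rightarrow> complex" where
  "qnome \<tau> = exp (2 * of_real pi * \<i> * \<tau>)"

definition E2 :: "complex \<Rightarrow> complex" where
  "E2 \<tau> = 1 - 24 * (\<Sum>n. of_nat (sigma 1 (Suc n)) * qnome \<tau> ^ Suc n)"

definition E4 :: "complex \<Rightarrow> complex" where
  "E4 \<tau> = 1 + 240 * (\<Sum>n. of_nat (sigma 3 (Suc n)) * qnome \<tau> ^ Suc n)"

definition E6 :: "complex \<Rightarrow> complex" where
  "E6 \<tau> = 1 - 504 * (\<Sum>n. of_nat (sigma 5 (Suc n)) * qnome \<tau> ^ Suc n)"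

definition Delta :: "complex \<Rightarrow> complex" where
  "Delta \<tau> = (E4 \<tau> ^ 3 - E6 \<tau> ^ 2) / 1728"

definition jinv :: "complex \<Rightarrow> complex" where
  "jinv \<tau> = E4 \<tau> ^ 3 / Delta \<tau>"

definition ffun :: "complex \<Rightarrow> complex" where
  "ffun \<tau> = E4 \<tau> * E6 \<tau> / Delta \<tau>"

definition E2star :: "complex \<Rightarrow> complex" where
  "E2star \<tau> = E2 \<tau> - of_real (3 / (pi * Im \<tau>))"

definition chistar :: "complex \<Rightarrow> complex" where
  "chistar \<tau> = E2star \<tau> * ffun \<tau>"

(* integer 2x2 matrices (a,b,c,d) = [[a,b],[c,d]] acting by Moebius transformations *)
definition moeb :: "int \<times> int \<times> int \<times> int \<Rightarrow> complex \<Rightarrow> complex" where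
  "moeb g \<tau> = (case g of (a,b,c,d) \<Rightarrow>
      (of_int a * \<tau> + of_int b) / (of_int c * \<tau> + of_int d))"

definition primmat :: "int \<Rightarrow> (int \<times> int \<times> int \<times> int) set" where
  "primmat N = {(a,b,c,d). a * d - b * c = N \<and> gcd (gcd a b) (gcd c d) = 1}"

(* Polynomials in Q[X,Y,Z] are represented as nested univariate polynomials:
   outermost variable Y, middle variable Z, innermost variable X. *)
definition to_complex3 :: "rat poly poly poly \<Rightarrow> complex poly poly poly" where
  "to_complex3 P = map_poly (map_poly (map_poly of_rat)) P"

definition eval3 :: "rat poly poly poly \<Rightarrow> complex \<Rightarrow> complex \<Rightarrow> complex \<Rightarrow> complex" where
  "eval3 P x y z = poly (poly (poly (to_complex3 P) [:[:y:]:]) [:z:]) x"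

end

theory Submission
  imports Defs "HOL-Real_Asymp.Real_Asymp"
begin

lemma sigma_le: "sigma k (Suc n) \<le> Suc n ^ Suc k"
proof -
  let ?m = "Suc n"
  have sub: "{d. d dvd ?m} \<subseteq> {1..?m}"
    by (auto intro: dvd_imp_le simp: Suc_le_eq dvd_pos_nat[of ?m] ) 
  have "sigma k ?m \<le> card {d. d dvd ?m} * ?m ^ k"
    unfolding sigma_def
    using sum_bounded_above[of "{d. d dvd ?m}" "\<lambda>d. d^k" "?m^k"]
    by (auto intro: power_mono dvd_imp_le)
  also have "card {d. d dvd ?m} \<le> ?m"
    using card_mono[OF _ sub] by simp
  hence "card {d. d dvd ?m} * ?m ^ k \<le> ?m * ?m ^ k" by (rule mult_le_mono1)
  finally show ?thesis by simp
qed

lemma pow_le_fact_exp: "(x::real) \<ge> 0 \<Longrightarrow> x ^ m \<le> fact m * exp x"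
proof -
  assume x: "x \<ge> 0"
  have s: "summable (\<lambda>n. x ^ n / fact n)" using summable_exp_generic[of x] by (simp add: divide_inverse ac_simps)
  have "x ^ m / fact m \<le> (\<Sum>n. x ^ n / fact n)"
    using sum_le_suminf[OF s, of "{m}"] x by auto
  also have "\<dots> = exp x" by (simp add: exp_def divide_inverse ac_simps)
  finally show ?thesis by (simp add: divide_le_eq mult.commute)
qed


definition tr :: "nat \<Rightarrow> real \<Rightarrow> real" where
  "tr k r = (\<Sum>n. real (sigma k (n+2)) * r^n)"
definition sr :: "nat \<Rightarrow> real \<Rightarrow> real" where
  "sr k r = (\<Sum>n. real (sigma k (Suc n)) * r^(Suc n))"

lemma sigma_one: "sigma k (Suc 0) = 1"
proof -
  have "{d. d dvd Suc 0} = {1}" by auto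
  thus ?thesis by (simp add: sigma_def)
qed

lemma tr_major:
  assumes r: "0 \<le> r" "r \<le> exp (-2)"
  shows "real (sigma k (n+2)) * r^n \<le> fact (Suc k) * exp 2 * exp (-1) ^ n"
proof -
  have "real (sigma k (Suc (Suc n))) \<le> real (Suc (Suc n) ^ Suc k)"
    using sigma_le[of k "Suc n"] by (simp only: of_nat_le_iff)
  hence "real (sigma k (n+2)) \<le> real (n+2) ^ Suc k" by (simp add: algebra_simps)
  also have "\<dots> \<le> fact (Suc k) * exp (real (n+2))" by (rule pow_le_fact_exp) simp
  finally have a: "real (sigma k (n+2)) \<le> fact (Suc k) * exp (real (n+2))" .
  have b: "r^n \<le> exp (-2) ^ n" using r by (intro power_mono) auto
  have "real (sigma k (n+2)) * r^n \<le> fact (Suc k) * exp (real (n+2)) * exp (-2) ^ n"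
    using a b r by (intro mult_mono) auto
  also have "\<dots> = fact (Suc k) * exp 2 * exp (-1) ^ n"
    by (simp add: exp_of_nat_mult[symmetric] exp_add[symmetric] flip: exp_of_nat_mult)
  finally show ?thesis .
qed

definition Mk :: "nat \<Rightarrow> real" where
  "Mk k = fact (Suc k) * exp 2 * (1 / (1 - exp (-1)))"

lemma major_sums: "(\<lambda>n. fact (Suc k) * exp 2 * exp (-1::real) ^ n) sums Mk k"
  unfolding Mk_def by (intro sums_mult geometric_sums) auto

lemma tr_props:
  assumes r: "0 \<le> r" "r \<le> exp (-2)"
  shows "summable (\<lambda>n. real (sigma k (n+2)) * r^n)" "0 \<le> tr k r" "tr k r \<le> Mk k"
proof -
  have s: "summable (\<lambda>n. fact (Suc k) * exp 2 * exp (-1::real) ^ n)"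
    using major_sums sums_summable by blast
  show s2: "summable (\<lambda>n. real (sigma k (n+2)) * r^n)"
    by (rule summable_comparison_test'[OF s, of 0]) (use r tr_major in auto)
  show "0 \<le> tr k r" unfolding tr_def by (rule suminf_nonneg[OF s2]) (use r in auto)
  have "tr k r \<le> (\<Sum>n. fact (Suc k) * exp 2 * exp (-1::real) ^ n)"
    unfolding tr_def by (rule suminf_le[OF _ s2 s]) (use r tr_major in auto)
  also have "\<dots> = Mk k" using major_sums sums_unique by metis
  finally show "tr k r \<le> Mk k" .
qed

lemma sr_props:
  assumes r: "0 \<le> r" "r \<le> exp (-2)"
  shows "summable (\<lambda>n. real (sigma k (Suc n)) * r^(Suc n))" "sr k r = r + r^2 * tr k r"
proof -
  let ?f = "\<lambda>n. real (sigma k (Suc n)) * r^(Suc n)"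
  have e: "(\<lambda>n. ?f (Suc n)) = (\<lambda>n. r^2 * (real (sigma k (n+2)) * r^n))"
    by (auto simp: power2_eq_square algebra_simps)
  have "summable (\<lambda>n. ?f (Suc n))" unfolding e by (intro summable_mult tr_props(1)[OF r])
  thus s: "summable ?f" by (rule summable_Suc_iff[THEN iffD1])
  have "sr k r = ?f 0 + (\<Sum>n. ?f (Suc n))" unfolding sr_def using suminf_split_head[OF s] by simp
  also have "(\<Sum>n. ?f (Suc n)) = r^2 * tr k r" unfolding e tr_def
    by (rule suminf_mult[OF tr_props(1)[OF r]])
  finally show "sr k r = r + r^2 * tr k r" by (simp add: sigma_one)
qed

definition rq :: "real \<Rightarrow> real" where "rq y = exp (-2*pi*y)"
definition E2r where "E2r r = 1 - 24 * sr 1 r"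
definition E4r where "E4r r = 1 + 240 * sr 3 r"
definition E6r where "E6r r = 1 - 504 * sr 5 r"
definition Dr where "Dr r = (E4r r ^ 3 - E6r r ^ 2) / 1728"
definition chir :: "real \<Rightarrow> real" where
  "chir y = (E2r (rq y) - 3 / (pi * y)) * (E4r (rq y) * E6r (rq y) / Dr (rq y))"

lemma qnome_iy: "qnome (\<i> * of_real y) = of_real (rq y)"
proof -
  have "2 * of_real pi * \<i> * (\<i> * of_real y) = (of_real (-2*pi*y) :: complex)"
    by (simp add: algebra_simps)
  thus ?thesis unfolding qnome_def rq_def by (simp only: exp_of_real)
qed

lemma ser_iy:
  assumes r: "0 \<le> r" "r \<le> exp (-2)"
  shows "(\<Sum>n. of_nat (sigma k (Suc n)) * (of_real r :: complex) ^ Suc n) = of_real (sr k r)"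
proof -
  have "of_real (sr k r) = (\<Sum>n. (of_real (real (sigma k (Suc n)) * r^(Suc n)) :: complex))"
    unfolding sr_def by (rule suminf_of_real[OF sr_props(1)[OF r]])
  thus ?thesis by simp
qed

lemma chistar_iy:
  assumes y: "y > 0" and r: "rq y \<le> exp (-2)"
  shows "chistar (\<i> * of_real y) = of_real (chir y)"
proof -
  have r0: "0 \<le> rq y" by (simp add: rq_def)
  note s = ser_iy[OF r0 r]
  have "E2 (\<i> * of_real y) = of_real (E2r (rq y))" unfolding E2_def E2r_def qnome_iy s by simp
  moreover have "E4 (\<i> * of_real y) = of_real (E4r (rq y))" unfolding E4_def E4r_def qnome_iy s by simp
  moreover have "E6 (\<i> * of_real y) = of_real (E6r (rq y))" unfolding E6_def E6r_def qnome_iy s by simp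
  ultimately show ?thesis
    unfolding chistar_def E2star_def ffun_def Delta_def chir_def Dr_def by simp
qed

definition Bd :: "(real \<Rightarrow> real) \<Rightarrow> bool" where
  "Bd f \<longleftrightarrow> (\<exists>C. eventually (\<lambda>y. \<bar>f y\<bar> \<le> C) at_top)"

lemma Bd_const[intro]: "Bd (\<lambda>_. c)"
  unfolding Bd_def by (intro exI[of _ "\<bar>c\<bar>"]) simp

lemma Bd_add[intro]: "Bd f \<Longrightarrow> Bd g \<Longrightarrow> Bd (\<lambda>y. f y + g y)"
  unfolding Bd_def
proof (elim exE)
  fix C D assume "eventually (\<lambda>y. \<bar>f y\<bar> \<le> C) at_top" "eventually (\<lambda>y. \<bar>g y\<bar> \<le> D) at_top"
  hence "eventually (\<lambda>y. \<bar>f y + g y\<bar> \<le> C + D) at_top"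
    by eventually_elim (simp add: abs_triangle_ineq order_trans[OF abs_triangle_ineq])
  thus "\<exists>C. eventually (\<lambda>y. \<bar>f y + g y\<bar> \<le> C) at_top" by blast
qed

lemma Bd_mult[intro]: "Bd f \<Longrightarrow> Bd g \<Longrightarrow> Bd (\<lambda>y. f y * g y)"
  unfolding Bd_def
proof (elim exE)
  fix C D assume "eventually (\<lambda>y. \<bar>f y\<bar> \<le> C) at_top" "eventually (\<lambda>y. \<bar>g y\<bar> \<le> D) at_top"
  hence "eventually (\<lambda>y. \<bar>f y * g y\<bar> \<le> C * D) at_top"
    by eventually_elim (simp add: abs_mult mult_mono')
  thus "\<exists>C. eventually (\<lambda>y. \<bar>f y * g y\<bar> \<le> C) at_top" by blast
qed

lemma Bd_uminus[intro]: "Bd f \<Longrightarrow> Bd (\<lambda>y. - f y)"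
  unfolding Bd_def by simp

lemma Bd_diff[intro]: "Bd f \<Longrightarrow> Bd g \<Longrightarrow> Bd (\<lambda>y. f y - g y)"
  using Bd_add[of f "\<lambda>y. - g y"] Bd_uminus[of g] by simp

lemma Bd_pow[intro]: "Bd f \<Longrightarrow> Bd (\<lambda>y. f y ^ n)"
  by (induction n) auto

lemma Bd_divide[intro]: "Bd f \<Longrightarrow> Bd (\<lambda>y. f y / c)"
  using Bd_mult[of f "\<lambda>_. 1/c"] Bd_const[of "1/c"] by simp

lemma Bd_sum: "finite A \<Longrightarrow> (\<And>i. i \<in> A \<Longrightarrow> Bd (f i)) \<Longrightarrow> Bd (\<lambda>y. \<Sum>i\<in>A. f i y)"
  by (induction A rule: finite_induct) auto

lemma Bd_ev: "Bd f \<Longrightarrow> eventually (\<lambda>y. f y = g y) at_top \<Longrightarrow> Bd g"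
  unfolding Bd_def
proof (elim exE)
  fix C assume "eventually (\<lambda>y. \<bar>f y\<bar> \<le> C) at_top" "eventually (\<lambda>y. f y = g y) at_top"
  hence "eventually (\<lambda>y. \<bar>g y\<bar> \<le> C) at_top" by eventually_elim simp
  thus "\<exists>C. eventually (\<lambda>y. \<bar>g y\<bar> \<le> C) at_top" by blast
qed

lemma Bd_tendsto: "(f \<longlongrightarrow> c) at_top \<Longrightarrow> Bd f"
proof -
  assume "(f \<longlongrightarrow> c) at_top"
  hence "eventually (\<lambda>y. dist (f y) c < 1) at_top" by (rule tendstoD) simp
  hence "eventually (\<lambda>y. \<bar>f y\<bar> \<le> \<bar>c\<bar> + 1) at_top"
    by eventually_elim (auto simp: dist_real_def)
  thus ?thesis unfolding Bd_def by blast
qed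

lemma Bd_compose: "Bd f \<Longrightarrow> filterlim g at_top at_top \<Longrightarrow> Bd (\<lambda>y. f (g y))"
  unfolding Bd_def using filterlim_iff by blast

lemma Bd_inv:
  assumes "Bd Q" "(r \<longlongrightarrow> 0) at_top"
  shows "Bd (\<lambda>y. 1 / (1 + r y * Q y))" "eventually (\<lambda>y. 1 + r y * Q y \<ge> 1/2) at_top"
proof -
  obtain C where C: "eventually (\<lambda>y. \<bar>Q y\<bar> \<le> C) at_top" using assms(1) unfolding Bd_def by blast
  have "eventually (\<lambda>y. dist (r y) 0 < 1 / (2 * (\<bar>C\<bar> + 1))) at_top"
    using assms(2) by (rule tendstoD) (simp add: add_pos_nonneg)
  with C have ev: "eventually (\<lambda>y. 1 + r y * Q y \<ge> 1/2) at_top"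
  proof eventually_elim
    case (elim y)
    have "\<bar>r y * Q y\<bar> \<le> 1 / (2 * (\<bar>C\<bar> + 1)) * (\<bar>C\<bar> + 1)"
      unfolding abs_mult using elim by (intro mult_mono) (auto simp: dist_real_def)
    also have "\<dots> = 1/2" by simp
    finally show ?case by linarith
  qed
  thus "eventually (\<lambda>y. 1 + r y * Q y \<ge> 1/2) at_top" .
  from ev have "eventually (\<lambda>y. \<bar>1 / (1 + r y * Q y)\<bar> \<le> 2) at_top"
    by eventually_elim (simp add: divide_le_eq)
  thus "Bd (\<lambda>y. 1 / (1 + r y * Q y))" unfolding Bd_def by blast
qed

lemma chi_alg:
  fixes r t e2 e4 e6 W :: real
  assumes r: "r > 0" and W: "3*e4 - 2*e6 = 1728 + r*W"
    and Q: "1 + r * ((W + 3*e4^2 - e6^2 + r*e4^3)/1728) \<noteq> 0"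
  shows "(t + r*e2) * ((1+r*e4)*(1+r*e6) / (((1+r*e4)^3 - (1+r*e6)^2)/1728)) * r - t
       = r * ((e2*(1+r*(e4+e6+r*e4*e6)) + t*((e4+e6+r*e4*e6) - (W + 3*e4^2 - e6^2 + r*e4^3)/1728))
              / (1 + r * ((W + 3*e4^2 - e6^2 + r*e4^3)/1728)))"
proof -
  define Q where "Q = (W + 3*e4^2 - e6^2 + r*e4^3)/1728"
  define P where "P = e4+e6+r*e4*e6"
  have D: "((1+r*e4)^3 - (1+r*e6)^2)/1728 = r * (1 + r*Q)"
  proof -
    have "(1+r*e4)^3 - (1+r*e6)^2 = r*(3*e4 - 2*e6) + r^2*(3*e4^2 - e6^2) + r^3*e4^3"
      by (simp add: power2_eq_square power3_eq_cube algebra_simps)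
    also have "\<dots> = 1728 * (r * (1 + r*Q))" unfolding W Q_def
      by (simp add: power2_eq_square power3_eq_cube field_simps)
    finally show ?thesis by simp
  qed
  have E: "(1+r*e4)*(1+r*e6) = 1 + r*P" unfolding P_def by (simp add: algebra_simps)
  have Q': "1 + r*Q \<noteq> 0" using Q unfolding Q_def .
  have a: "(t + r*e2) * ((1 + r*P) / (r * (1 + r*Q))) * r = (t + r*e2) * (1 + r*P) / (1 + r*Q)"
    using r by simp
  have key: "(t + r*e2)*(1+r*P) - t*(1+r*Q) = r*(e2*(1+r*P) + t*(P-Q))" by (simp add: algebra_simps)
  have gen: "\<And>A B d T::real. d \<noteq> 0 \<Longrightarrow> A - T*d = B \<Longrightarrow> A/d - T = B/d"
    by (simp add: field_simps)
  have "(t + r*e2) * ((1 + r*P) / (r * (1 + r*Q))) * r - t = r * ((e2*(1+r*P) + t*(P - Q)) / (1 + r*Q))"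
    unfolding a using gen[OF Q' key] by simp
  thus ?thesis unfolding D E by (simp add: P_def Q_def)
qed

lemma rq_ev: "eventually (\<lambda>y. rq y \<le> exp (-2)) at_top"
  unfolding rq_def by real_asymp

lemma rq_lim: "(rq \<longlongrightarrow> 0) at_top"
  unfolding rq_def by real_asymp

lemma rq_pos[simp]: "rq y > 0" by (simp add: rq_def)
lemma rq_nonneg[simp]: "rq y \<ge> 0" by (simp add: rq_def)

lemma Bd_tr: "Bd (\<lambda>y. tr k (rq y))"
proof -
  from rq_ev have "eventually (\<lambda>y. \<bar>tr k (rq y)\<bar> \<le> Mk k) at_top"
    by eventually_elim (use tr_props rq_pos in \<open>auto simp: less_imp_le\<close>)
  thus ?thesis unfolding Bd_def by blast
qed

lemma Bd_rq: "Bd rq" using Bd_tendsto[OF rq_lim] .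

lemma Bd_t: "Bd (\<lambda>y. 1 - 3 / (pi * y))"
  by (rule Bd_tendsto[of _ 1]) real_asymp

lemma chir_asym: "\<exists>G. Bd G \<and> eventually (\<lambda>y. chir y * rq y = (1 - 3/(pi*y)) + rq y * G y) at_top"
proof -
  define T1 where "T1 y = tr 1 (rq y)" for y
  define T3 where "T3 y = tr 3 (rq y)" for y
  define T5 where "T5 y = tr 5 (rq y)" for y
  define e2 where "e2 y = -24 - 24 * rq y * T1 y" for y
  define e4 where "e4 y = 240 + 240 * rq y * T3 y" for y
  define e6 where "e6 y = -504 - 504 * rq y * T5 y" for y
  define W where "W y = 720 * T3 y + 1008 * T5 y" for y
  define Q where "Q y = (W y + 3*e4 y^2 - e6 y^2 + rq y*e4 y^3)/1728" for y
  define P where "P y = e4 y+e6 y+rq y*e4 y*e6 y" for y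
  define t where "t y = 1 - 3 / (pi * y)" for y
  define G where "G y = (e2 y*(1+rq y*P y) + t y*(P y - Q y)) / (1 + rq y * Q y)" for y
  have B1: "Bd T1" "Bd T3" "Bd T5" unfolding T1_def T3_def T5_def by (rule Bd_tr)+
  have Bt: "Bd t" unfolding t_def by (rule Bd_t)
  note Bd_rq
  have Be: "Bd e2" "Bd e4" "Bd e6" unfolding e2_def e4_def e6_def by (intro Bd_add Bd_diff Bd_mult Bd_const B1 Bd_rq)+
  have BQ: "Bd Q" unfolding Q_def W_def
    using B1 Be Bd_rq by (intro Bd_mult Bd_add Bd_diff Bd_pow Bd_const B1 Be Bd_rq Bd_divide)+
  have BP: "Bd P" unfolding P_def by (intro Bd_add Bd_diff Bd_mult Bd_const Be Bd_rq)+
  note inv = Bd_inv[OF BQ rq_lim]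
  have "Bd (\<lambda>y. (e2 y*(1+rq y*P y) + t y*(P y - Q y)) * (1 / (1 + rq y * Q y)))"
    by (intro Bd_mult Bd_add Bd_diff Be BP BQ Bt Bd_rq inv(1) Bd_const)+
  hence BG: "Bd G" unfolding G_def by simp
  have ev0: "eventually (\<lambda>y::real. y > 0) at_top" by (rule eventually_gt_at_top)
  from ev0 rq_ev inv(2)
  have "eventually (\<lambda>y. chir y * rq y = (1 - 3/(pi*y)) + rq y * G y) at_top"
  proof eventually_elim
    case (elim y)
    let ?r = "rq y"
    have r0: "0 \<le> ?r" using rq_pos less_imp_le by blast
    have s1: "E2r ?r = 1 + ?r * e2 y" unfolding E2r_def e2_def T1_def sr_props(2)[OF r0 elim(2)]
      by (simp add: power2_eq_square algebra_simps)
    have s3: "E4r ?r = 1 + ?r * e4 y" unfolding E4r_def e4_def T3_def sr_props(2)[OF r0 elim(2)]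
      by (simp add: power2_eq_square algebra_simps)
    have s5: "E6r ?r = 1 + ?r * e6 y" unfolding E6r_def e6_def T5_def sr_props(2)[OF r0 elim(2)]
      by (simp add: power2_eq_square algebra_simps)
    have Wy: "3*e4 y - 2*e6 y = 1728 + ?r * W y" unfolding e4_def e6_def W_def by (simp add: algebra_simps)
    have Qy: "1 + ?r * ((W y + 3*e4 y^2 - e6 y^2 + ?r*e4 y^3)/1728) \<noteq> 0"
      using elim(3) unfolding Q_def by linarith
    have c: "chir y = (t y + ?r * e2 y) * ((1 + ?r*e4 y)*(1 + ?r*e6 y) / (((1 + ?r*e4 y)^3 - (1 + ?r*e6 y)^2)/1728))"
      unfolding chir_def Dr_def s1 s3 s5 t_def by (simp add: algebra_simps)
    have "chir y * ?r - t y = ?r * G y"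
      unfolding c G_def P_def Q_def by (rule chi_alg[OF rq_pos Wy Qy])
    thus ?case unfolding t_def by (simp add: algebra_simps)
  qed
  with BG show ?thesis by blast
qed

definition approx :: "(real \<Rightarrow> real) \<Rightarrow> (real \<Rightarrow> real) \<Rightarrow> bool" where
  "approx f g \<longleftrightarrow> (\<exists>h. Bd h \<and> eventually (\<lambda>y. f y = g y + rq y * h y) at_top)"

lemma approx_add:
  assumes "approx f1 g1" "approx f2 g2" shows "approx (\<lambda>y. f1 y + f2 y) (\<lambda>y. g1 y + g2 y)"
proof -
  obtain h1 h2 where h: "Bd h1" "Bd h2" "eventually (\<lambda>y. f1 y = g1 y + rq y * h1 y) at_top"
    "eventually (\<lambda>y. f2 y = g2 y + rq y * h2 y) at_top" using assms unfolding approx_def by blast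
  from h(3,4) have "eventually (\<lambda>y. f1 y + f2 y = (g1 y + g2 y) + rq y * (h1 y + h2 y)) at_top"
    by eventually_elim (simp add: algebra_simps)
  with h(1,2) show ?thesis unfolding approx_def by blast
qed

lemma approx_mult:
  assumes "approx f1 g1" "approx f2 g2" "Bd g1" "Bd g2"
  shows "approx (\<lambda>y. f1 y * f2 y) (\<lambda>y. g1 y * g2 y)"
proof -
  obtain h1 h2 where h: "Bd h1" "Bd h2" "eventually (\<lambda>y. f1 y = g1 y + rq y * h1 y) at_top"
    "eventually (\<lambda>y. f2 y = g2 y + rq y * h2 y) at_top" using assms unfolding approx_def by blast
  from h(3,4) have "eventually (\<lambda>y. f1 y * f2 y = (g1 y * g2 y) + rq y * (h1 y * g2 y + g1 y * h2 y + rq y * h1 y * h2 y)) at_top"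
    by eventually_elim (simp add: algebra_simps)
  moreover have "Bd (\<lambda>y. h1 y * g2 y + g1 y * h2 y + rq y * h1 y * h2 y)"
    using h(1,2) assms(3,4) Bd_rq by (intro Bd_add Bd_mult h(1,2) assms(3,4) Bd_rq)+
  ultimately show ?thesis unfolding approx_def by blast
qed

lemma approx_refl: "approx f f"
  unfolding approx_def by (intro exI[of _ "\<lambda>_. 0"]) auto

lemma approx_pow:
  assumes "approx f g" "Bd g" shows "approx (\<lambda>y. f y ^ k) (\<lambda>y. g y ^ k)"
proof (induction k)
  case 0 show ?case using approx_refl[of "\<lambda>_. 1"] by simp
next
  case (Suc k)
  show ?case using approx_mult[OF assms(1) Suc assms(2) Bd_pow[OF assms(2)]] by simp
qed

lemma approx_sum:
  "finite A \<Longrightarrow> (\<And>i. i \<in> A \<Longrightarrow> approx (f i) (g i)) \<Longrightarrow> approx (\<lambda>y. \<Sum>i\<in>A. f i y) (\<lambda>y. \<Sum>i\<in>A. g i y)"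
proof (induction A rule: finite_induct)
  case empty show ?case using approx_refl[of "\<lambda>_. 0"] by simp
next
  case (insert x F)
  show ?case using approx_add[OF insert(4)[of x] insert(3)] insert by simp
qed

lemma approx_small: "Bd h \<Longrightarrow> approx (\<lambda>y. rq y * h y) (\<lambda>_. 0)"
  unfolding approx_def by auto

lemma approx_ev: "approx f g \<Longrightarrow> eventually (\<lambda>y. f y = f' y) at_top \<Longrightarrow> approx f' g"
  unfolding approx_def
proof (elim exE conjE)
  fix h assume "Bd h" and e: "eventually (\<lambda>y. f y = g y + rq y * h y) at_top" "eventually (\<lambda>y. f y = f' y) at_top"
  from e have "eventually (\<lambda>y. f' y = g y + rq y * h y) at_top" by eventually_elim simp
  with \<open>Bd h\<close> show "\<exists>h. Bd h \<and> eventually (\<lambda>y. f' y = g y + rq y * h y) at_top" by blast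
qed

lemma approx_Bd: "approx f g \<Longrightarrow> Bd g \<Longrightarrow> Bd f"
  unfolding approx_def
proof (elim exE conjE)
  fix h assume "Bd h" "eventually (\<lambda>y. f y = g y + rq y * h y) at_top" "Bd g"
  have "Bd (\<lambda>y. g y + rq y * h y)" by (intro Bd_add Bd_mult \<open>Bd g\<close> \<open>Bd h\<close> Bd_rq)
  thus "Bd f" using Bd_ev \<open>eventually _ _\<close> by (metis (mono_tags, lifting) eventually_mono)
qed

lemma poly_not_small:
  fixes h :: "real poly"
  assumes h: "h \<noteq> 0" and G: "Bd G" and ev: "eventually (\<lambda>y. poly h (1/y) = rq y * G y) at_top"
  shows False
proof -
  obtain h' where hd: "h = [:- 0, 1:] ^ order 0 h * h'" and nd: "\<not> [:- 0, 1:] dvd h'"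
    using order_decomp[OF h] by blast
  define j where "j = order 0 h"
  have c0: "poly h' 0 \<noteq> 0" using nd by (simp add: poly_eq_0_iff_dvd)
  have ph: "poly h x = x ^ j * poly h' x" for x
    by (subst hd) (simp add: j_def)
  have lim: "((\<lambda>y::real. poly h' (1/y)) \<longlongrightarrow> poly h' 0) at_top"
  proof -
    have "((\<lambda>y::real. 1/y) \<longlongrightarrow> 0) at_top" by real_asymp
    thus ?thesis by (rule isCont_tendsto_compose[rotated]) (rule poly_isCont)
  qed
  have "eventually (\<lambda>y. dist (poly h' (1/y)) (poly h' 0) < \<bar>poly h' 0\<bar>/2) at_top"
    using lim c0 by (intro tendstoD) auto
  hence e1: "eventually (\<lambda>y. \<bar>poly h' (1/y)\<bar> \<ge> \<bar>poly h' 0\<bar>/2) at_top"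
  proof eventually_elim
    case (elim y)
    thus ?case unfolding dist_real_def by arith
  qed
  obtain C where C: "eventually (\<lambda>y. \<bar>G y\<bar> \<le> C) at_top" using G unfolding Bd_def by blast
  have lim2: "((\<lambda>y::real. y ^ j * exp (-2*pi*y)) \<longlongrightarrow> 0) at_top" by real_asymp
  have "eventually (\<lambda>y. dist (y ^ j * exp (-2*pi*y)) 0 < \<bar>poly h' 0\<bar>/(2 * (\<bar>C\<bar>+1))) at_top"
    using lim2 c0 by (intro tendstoD) (auto intro!: divide_pos_pos add_pos_nonneg)
  moreover have "eventually (\<lambda>y::real. y > 0) at_top" by (rule eventually_gt_at_top)
  ultimately have "eventually (\<lambda>y::real. False) at_top" using e1 C ev
  proof eventually_elim
    case (elim y)
    let ?c = "\<bar>poly h' 0\<bar>"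
    have yj: "y ^ j > 0" using elim(2) by simp
    have "\<bar>poly h (1/y)\<bar> = (1/y)^j * \<bar>poly h' (1/y)\<bar>" unfolding ph abs_mult using elim(2) by simp
    also have "\<dots> \<ge> (1/y)^j * (?c/2)" using elim(3) elim(2) by (intro mult_left_mono) auto
    finally have a: "(1/y)^j * (?c/2) \<le> rq y * \<bar>G y\<bar>" using elim(5) rq_pos[of y]
      by (simp add: abs_mult abs_of_pos)
    also have "\<dots> \<le> rq y * (\<bar>C\<bar> + 1)" using elim(4) rq_pos by (intro mult_left_mono) auto
    finally have b: "?c/2 \<le> y^j * rq y * (\<bar>C\<bar> + 1)" using yj
      by (simp add: power_one_over field_simps)
    have "y ^ j * rq y < ?c/(2 * (\<bar>C\<bar>+1))" using elim(1) yj by (simp add: dist_real_def rq_def)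
    hence "y ^ j * rq y * (\<bar>C\<bar> + 1) < ?c/2"
      by (simp add: field_simps add_pos_nonneg)
    with b show False by linarith
  qed
  thus False by simp
qed

lemma h_nonzero:
  fixes n D :: nat and SD :: "(nat \<times> nat) set" and c :: "nat \<Rightarrow> nat \<Rightarrow> real" and a :: real
  assumes n: "n \<ge> 2" and a: "a \<noteq> 0" and fin: "finite SD" and ne: "SD \<noteq> {}"
    and SD: "\<And>l k. (l,k) \<in> SD \<Longrightarrow> n*k + l = D \<and> c l k \<noteq> 0"
  shows "(\<Sum>(l,k)\<in>SD. smult (c l k) ([:1,-a:]^l * [:1, -a/n:]^k)) \<noteq> 0"
proof
  assume h0: "(\<Sum>(l,k)\<in>SD. smult (c l k) ([:1,-a:]^l * [:1, -a/n:]^k)) = 0"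
  define km where "km = Max (snd ` SD)"
  define m0 where "m0 = D - n*km"
  have kmin: "km \<in> snd ` SD" unfolding km_def using fin ne by (intro Max_in) auto
  then obtain l0 where l0: "(l0, km) \<in> SD" by auto
  have l0m: "l0 = m0" using SD[OF l0] unfolding m0_def by arith
  have kle: "k \<le> km" if "(l,k) \<in> SD" for l k
    unfolding km_def using fin that by (intro Max_ge) force+
  have lge: "m0 \<le> l" if "(l,k) \<in> SD" for l k
  proof -
    have "n*k \<le> n*km" using kle[OF that] by simp
    thus ?thesis using SD[OF that] unfolding m0_def by arith
  qed
  have lm: "l = m0 \<longleftrightarrow> k = km" if "(l,k) \<in> SD" for l k
  proof -
    have e1: "n*k + l = D" "n*km + m0 = D" using SD[OF that] SD[OF l0] l0m by auto
    have "l = m0 \<longleftrightarrow> n*k = n*km" using e1 by linarith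
    also have "\<dots> \<longleftrightarrow> k = km" using n by simp
    finally show ?thesis .
  qed
  define g where "g = (\<Sum>(l,k)\<in>SD. smult (c l k) ([:1,-a:]^(l - m0) * [:1, -a/n:]^k))"
  have "(\<Sum>(l,k)\<in>SD. smult (c l k) ([:1,-a:]^l * [:1, -a/n:]^k)) = [:1,-a:]^m0 * g"
    unfolding g_def sum_distrib_left
  proof (rule sum.cong[OF refl], clarify)
    fix l k assume "(l,k) \<in> SD"
    hence "l = m0 + (l - m0)" using lge by force
    hence "[:1,-a:]^l = [:1,-a:]^m0 * [:1,-a:]^(l - m0)" by (metis power_add)
    thus "smult (c l k) ([:1,-a:]^l * [:1, -a/n:]^k) = [:1,-a:]^m0 * smult (c l k) ([:1,-a:]^(l - m0) * [:1, -a/n:]^k)"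
      by (simp add: algebra_simps)
  qed
  with h0 have "[:1,-a:]^m0 * g = 0" by simp
  moreover have "[:1,-a:]^m0 \<noteq> (0 :: real poly)" by simp
  ultimately have g0: "g = 0" by simp
  have "poly g (1/a) = (\<Sum>p\<in>SD. (if p = (m0,km) then c m0 km * (1 - 1/n)^km else 0))"
    unfolding g_def poly_sum
  proof (rule sum.cong[OF refl], clarify)
    fix l k assume lk: "(l,k) \<in> SD"
    have p: "poly (smult (c l k) ([:1,-a:]^(l - m0) * [:1, -a/n:]^k)) (1/a) = c l k * 0 ^ (l - m0) * (1 - 1/n)^k"
      using a by (simp add: field_simps)
    show "poly (smult (c l k) ([:1,-a:]^(l - m0) * [:1, -a/n:]^k)) (1/a) = (if (l,k) = (m0,km) then c m0 km * (1 - 1/n)^km else 0)"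
      unfolding p using lm[OF lk] lge[OF lk] by auto
  qed
  also have "\<dots> = c m0 km * (1 - 1/n)^km" using fin l0 l0m by (simp add: sum.delta')
  finally have "poly g (1/a) = c m0 km * (1 - 1/n)^km" .
  moreover have "c m0 km \<noteq> 0" using SD[OF l0] l0m by simp
  moreover have "(1 - 1/real n) \<noteq> 0" using n by simp
  ultimately have "poly g (1/a) \<noteq> 0" by (metis mult_eq_0_iff power_eq_0_iff)
  with g0 show False by simp
qed

lemma core:
  fixes n L K :: nat and c :: "nat \<Rightarrow> nat \<Rightarrow> real"
  assumes n: "n \<ge> 2" and nz: "\<exists>l\<le>L. \<exists>k\<le>K. c l k \<noteq> 0"
    and ev: "eventually (\<lambda>y. (\<Sum>l\<le>L. \<Sum>k\<le>K. c l k * chir y ^ l * chir (real n * y) ^ k) = 0) at_top"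
  shows False
proof -
  obtain G where BG: "Bd G" and evG: "eventually (\<lambda>y. chir y * rq y = (1 - 3/(pi*y)) + rq y * G y) at_top"
    using chir_asym by blast
  define t where "t y = 1 - 3/(pi*y)" for y
  define s where "s y = 1 - 3/(pi*(real n*y))" for y
  define B where "B y = chir y * rq y" for y
  define A where "A y = chir (real n * y) * rq y ^ n" for y
  have fl: "filterlim (\<lambda>y. real n * y) at_top at_top"
    using n by (intro filterlim_tendsto_pos_mult_at_top[OF tendsto_const _ filterlim_ident]) auto
  have Bt: "Bd t" unfolding t_def by (rule Bd_t)
  have Bs: "Bd s" unfolding s_def using Bd_compose[OF Bd_t fl] by simp
  have aB: "approx B t" unfolding approx_def B_def t_def using BG evG by blast
  have aA: "approx A s"
  proof -
    have e1: "eventually (\<lambda>y. chir (real n * y) * rq (real n * y) = (1 - 3/(pi*(real n * y))) + rq (real n * y) * G (real n * y)) at_top"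
      using evG fl by (rule filterlim_iff[THEN iffD1, rule_format, rotated]) 
    have rqn: "rq (real n * y) = rq y * rq y ^ (n - 1)" for y
    proof -
      have "rq (real n * y) = rq y ^ n" unfolding rq_def by (simp add: exp_of_nat_mult[symmetric] algebra_simps)
      also have "\<dots> = rq y * rq y ^ (n-1)" using n by (simp add: power_eq_if)
      finally show ?thesis .
    qed
    have rqn2: "rq y ^ n = rq y * rq y ^ (n - 1)" for y using n by (simp add: power_eq_if)
    from e1 have "eventually (\<lambda>y. A y = s y + rq y * (rq y ^ (n-1) * G (real n * y))) at_top"
    proof eventually_elim
      case (elim y)
      thus ?case unfolding A_def s_def rqn rqn2 by (simp add: algebra_simps)
    qed
    moreover have "Bd (\<lambda>y. rq y ^ (n-1) * G (real n * y))"
      by (intro Bd_mult Bd_pow Bd_rq Bd_compose[OF BG fl])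
    ultimately show ?thesis unfolding approx_def by blast
  qed
  have BB: "Bd B" by (rule approx_Bd[OF aB Bt])
  have BA: "Bd A" by (rule approx_Bd[OF aA Bs])
  define S where "S = {p \<in> {..L} \<times> {..K}. c (fst p) (snd p) \<noteq> 0}"
  define w where "w p = n * snd p + fst p" for p :: "nat \<times> nat"
  define D where "D = Max (w ` S)"
  define SD where "SD = {p \<in> S. w p = D}"
  have finS: "finite S" unfolding S_def by (rule finite_subset[of _ "{..L} \<times> {..K}"]) auto
  have neS: "S \<noteq> {}" using nz unfolding S_def by auto
  have wD: "w p \<le> D" if "p \<in> S" for p unfolding D_def using finS that by (intro Max_ge) auto
  have DS: "D \<in> w ` S" unfolding D_def using finS neS by (intro Max_in) auto
  have finSD: "finite SD" unfolding SD_def using finS by simp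
  have neSD: "SD \<noteq> {}" using DS unfolding SD_def by auto
  have ev2: "eventually (\<lambda>y. (\<Sum>p\<in>S. c (fst p) (snd p) * rq y ^ (D - w p) * B y ^ fst p * A y ^ snd p) = 0) at_top"
    using ev
  proof eventually_elim
    case (elim y)
    have "(\<Sum>l\<le>L. \<Sum>k\<le>K. c l k * chir y ^ l * chir (real n * y) ^ k)
        = (\<Sum>p\<in>{..L} \<times> {..K}. c (fst p) (snd p) * chir y ^ fst p * chir (real n * y) ^ snd p)"
      by (simp add: sum.cartesian_product case_prod_beta)
    also have "\<dots> = (\<Sum>p\<in>S. c (fst p) (snd p) * chir y ^ fst p * chir (real n * y) ^ snd p)"
      unfolding S_def by (rule sum.mono_neutral_right) auto
    finally have z: "(\<Sum>p\<in>S. c (fst p) (snd p) * chir y ^ fst p * chir (real n * y) ^ snd p) = 0"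
      using elim by simp
    have "(\<Sum>p\<in>S. c (fst p) (snd p) * rq y ^ (D - w p) * B y ^ fst p * A y ^ snd p)
       = (\<Sum>p\<in>S. rq y ^ D * (c (fst p) (snd p) * chir y ^ fst p * chir (real n * y) ^ snd p))"
    proof (rule sum.cong[OF refl])
      fix p assume p: "p \<in> S"
      have "rq y ^ D = rq y ^ (D - w p) * rq y ^ fst p * (rq y ^ n) ^ snd p"
        using wD[OF p] unfolding w_def by (simp add: power_add[symmetric] power_mult[symmetric] algebra_simps)
      thus "c (fst p) (snd p) * rq y ^ (D - w p) * B y ^ fst p * A y ^ snd p
          = rq y ^ D * (c (fst p) (snd p) * chir y ^ fst p * chir (real n * y) ^ snd p)"
        unfolding A_def B_def by (simp add: power_mult_distrib algebra_simps)
    qed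
    also have "\<dots> = 0" unfolding sum_distrib_left[symmetric] z by simp
    finally show ?case .
  qed
  define H where "H y = (\<Sum>p\<in>SD. c (fst p) (snd p) * t y ^ fst p * s y ^ snd p)" for y
  have ap: "approx (\<lambda>y. \<Sum>p\<in>S. c (fst p) (snd p) * rq y ^ (D - w p) * B y ^ fst p * A y ^ snd p)
               (\<lambda>y. \<Sum>p\<in>S. if w p = D then c (fst p) (snd p) * t y ^ fst p * s y ^ snd p else 0)"
  proof (rule approx_sum[OF finS])
    fix p assume p: "p \<in> S"
    show "approx (\<lambda>y. c (fst p) (snd p) * rq y ^ (D - w p) * B y ^ fst p * A y ^ snd p)
               (\<lambda>y. if w p = D then c (fst p) (snd p) * t y ^ fst p * s y ^ snd p else 0)"
    proof (cases "w p = D")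
      case True
      have "approx (\<lambda>y. c (fst p) (snd p) * (B y ^ fst p * A y ^ snd p)) (\<lambda>y. c (fst p) (snd p) * (t y ^ fst p * s y ^ snd p))"
        by (intro approx_mult approx_refl approx_pow aB aA Bt Bs Bd_const Bd_mult Bd_pow)
      thus ?thesis using True by (simp add: algebra_simps)
    next
      case False
      hence dw: "D - w p = Suc (D - w p - 1)" using wD[OF p] by simp
      have "approx (\<lambda>y. rq y * (c (fst p) (snd p) * rq y ^ (D - w p - 1) * B y ^ fst p * A y ^ snd p)) (\<lambda>_. 0)"
        by (intro approx_small Bd_mult Bd_pow Bd_const BB BA Bd_rq)
      thus ?thesis using False by (subst dw) (simp add: algebra_simps)
    qed
  qed
  have sumH: "(\<lambda>y. \<Sum>p\<in>S. if w p = D then c (fst p) (snd p) * t y ^ fst p * s y ^ snd p else 0) = H"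
    unfolding H_def SD_def by (simp add: sum.inter_filter[OF finS])
  have "approx (\<lambda>_. 0) H"
    using approx_ev[OF ap ev2] unfolding sumH .
  then obtain h where Bh: "Bd h" and evh: "eventually (\<lambda>y. 0 = H y + rq y * h y) at_top"
    unfolding approx_def by blast
  define a where "a = 3 / pi"
  define hp where "hp = (\<Sum>(l,k)\<in>SD. smult (c l k) ([:1,-a:]^l * [:1, -a/real n:]^k))"
  have hp0: "hp \<noteq> 0" unfolding hp_def
    by (rule h_nonzero[OF n _ finSD neSD]) (auto simp: a_def SD_def S_def w_def)
  have polyhp: "poly hp (1/y) = H y" for y
    unfolding hp_def H_def poly_sum t_def s_def a_def
    by (intro sum.cong refl) (auto simp: field_simps)
  have "eventually (\<lambda>y. poly hp (1/y) = rq y * (- h y)) at_top"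
    using evh by eventually_elim (simp add: polyhp)
  from poly_not_small[OF hp0 _ this] Bh show False by auto
qed

lemma poly_bound: "degree q \<le> m \<Longrightarrow> poly q (a::'a::comm_semiring_1) = (\<Sum>i\<le>m. coeff q i * a^i)"
proof -
  assume d: "degree q \<le> m"
  have "(\<Sum>i\<le>m. coeff q i * a^i) = (\<Sum>i\<le>degree q. coeff q i * a^i)"
    using d by (intro sum.mono_neutral_right) (auto simp: coeff_eq_0)
  thus ?thesis by (simp only: poly_altdef)
qed

lemma of_real_of_rat': "(of_rat q :: complex) = of_real (of_rat q)"
  by (cases q) (simp add: of_rat_rat)

lemma eval_const_Y:
  fixes p :: "rat poly poly" and L K :: nat
  assumes L: "degree p \<le> L" and K: "\<And>l. l \<le> L \<Longrightarrow> degree (coeff p l) \<le> K"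
  shows "eval3 [:p:] (of_real X) yv (of_real Z)
     = of_real (\<Sum>l\<le>L. \<Sum>k\<le>K. real_of_rat (coeff (coeff p l) k) * Z ^ l * X ^ k)"
proof -
  define P where "P = map_poly (map_poly (of_rat :: rat \<Rightarrow> complex)) p"
  have t: "to_complex3 [:p:] = [:P:]" unfolding to_complex3_def P_def by (simp add: map_poly_pCons)
  have cP: "coeff (coeff P l) k = of_rat (coeff (coeff p l) k)" for l k
    unfolding P_def by (simp add: coeff_map_poly)
  have inj: "map_poly (of_rat :: rat \<Rightarrow> complex) x \<noteq> 0" if "x \<noteq> 0" for x
  proof
    assume a: "map_poly (of_rat :: rat \<Rightarrow> complex) x = 0"
    have "coeff x i = 0" for i
    proof -
      have "coeff (map_poly (of_rat :: rat \<Rightarrow> complex) x) i = 0" using a by simp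
      thus ?thesis by (simp add: coeff_map_poly)
    qed
    with that show False by (simp add: poly_eq_iff)
  qed
  have dP: "degree P \<le> L" unfolding P_def using L by (subst degree_map_poly) (use inj in auto)
  have dPl: "degree (coeff P l) \<le> K" if "l \<le> L" for l
    unfolding P_def using K[OF that] by (simp add: coeff_map_poly degree_map_poly)
  have "eval3 [:p:] (of_real X) yv (of_real Z) = poly (poly P [:of_real Z:]) (of_real X)"
    unfolding eval3_def t by simp
  also have "poly P [:of_real Z:] = (\<Sum>l\<le>L. coeff P l * [:of_real Z:]^l)" by (rule poly_bound[OF dP])
  also have "poly \<dots> (of_real X) = (\<Sum>l\<le>L. poly (coeff P l) (of_real X) * of_real Z ^ l)"
    by (simp add: poly_sum poly_power)
  also have "\<dots> = (\<Sum>l\<le>L. (\<Sum>k\<le>K. coeff (coeff P l) k * of_real X ^ k) * of_real Z ^ l)"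
    by (intro sum.cong refl) (simp add: poly_bound[OF dPl])
  also have "\<dots> = of_real (\<Sum>l\<le>L. \<Sum>k\<le>K. real_of_rat (coeff (coeff p l) k) * Z ^ l * X ^ k)"
    by (simp add: cP sum_distrib_right sum_distrib_left of_real_of_rat' algebra_simps)
  finally show ?thesis .
qed

theorem mainTheorem9:
  fixes N :: int and Psi :: "rat poly poly poly"
  assumes "N \<ge> 2"
    and "Psi \<noteq> 0"
    and "irreducible (to_complex3 Psi)"
    and "\<forall>g\<in>primmat N. \<forall>\<tau>. Im \<tau> > 0 \<longrightarrow>
           eval3 Psi (chistar (moeb g \<tau>)) (jinv \<tau>) (chistar \<tau>) = 0"
  shows "degree Psi > 0"
proof (rule ccontr)
  assume "\<not> degree Psi > 0"
  hence d0: "degree Psi = 0" by simp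
  define p where "p = coeff Psi 0"
  have Pp: "Psi = [:p:]" unfolding p_def using degree_0_id[OF d0] by simp
  have p0: "p \<noteq> 0" using assms(2) Pp by auto
  define n where "n = nat N"
  have Nn: "N = int n" and n2: "n \<ge> 2" using assms(1) unfolding n_def by auto
  define g where "g = (N, 0::int, 0::int, 1::int)"
  have gM: "g \<in> primmat N" unfolding g_def primmat_def by simp
  define L where "L = degree p"
  define K where "K = Max ((\<lambda>l. degree (coeff p l)) ` {..L})"
  define c where "c l k = real_of_rat (coeff (coeff p l) k)" for l k
  have Lp: "degree p \<le> L" unfolding L_def by simp
  have KL: "degree (coeff p l) \<le> K" if "l \<le> L" for l
    unfolding K_def using that by (intro Max_ge) auto
  have nz: "\<exists>l\<le>L. \<exists>k\<le>K. c l k \<noteq> 0"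
  proof (intro exI conjI)
    show "L \<le> L" by simp
    show "degree (coeff p L) \<le> K" by (rule KL) simp
    have "coeff p L \<noteq> 0" unfolding L_def using p0 by simp
    thus "c L (degree (coeff p L)) \<noteq> 0" unfolding c_def by simp
  qed
  have fl: "filterlim (\<lambda>y. real n * y) at_top at_top"
    using n2 by (intro filterlim_tendsto_pos_mult_at_top[OF tendsto_const _ filterlim_ident]) auto
  have evn: "eventually (\<lambda>y. rq (real n * y) \<le> exp (-2)) at_top"
    using rq_ev fl by (rule filterlim_iff[THEN iffD1, rule_format, rotated])
  have ev0: "eventually (\<lambda>y::real. y > 0) at_top" by (rule eventually_gt_at_top)
  from ev0 rq_ev evn
  have ev: "eventually (\<lambda>y. (\<Sum>l\<le>L. \<Sum>k\<le>K. c l k * chir y ^ l * chir (real n * y) ^ k) = 0) at_top"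
  proof eventually_elim
    case (elim y)
    have ny: "real n * y > 0" using elim(1) n2 by simp
    have mo: "moeb g (\<i> * of_real y) = \<i> * of_real (real n * y)"
      unfolding g_def moeb_def Nn by simp
    have "Im (\<i> * complex_of_real y) > 0" using elim(1) by simp
    hence "eval3 Psi (chistar (moeb g (\<i> * of_real y))) (jinv (\<i> * of_real y)) (chistar (\<i> * of_real y)) = 0"
      using assms(4) gM by blast
    hence "eval3 [:p:] (of_real (chir (real n * y))) (jinv (\<i> * of_real y)) (of_real (chir y)) = 0"
      unfolding mo Pp chistar_iy[OF ny elim(3)] chistar_iy[OF elim(1) elim(2)] .
    moreover have "eval3 [:p:] (of_real (chir (real n * y))) (jinv (\<i> * of_real y)) (of_real (chir y))
       = of_real (\<Sum>l\<le>L. \<Sum>k\<le>K. c l k * chir y ^ l * chir (real n * y) ^ k)"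
      unfolding c_def by (rule eval_const_Y[OF Lp KL])
    ultimately have "(of_real (\<Sum>l\<le>L. \<Sum>k\<le>K. c l k * chir y ^ l * chir (real n * y) ^ k) :: complex) = 0"
      by simp
    thus ?case by (simp only: of_real_eq_0_iff)
  qed
  show False by (rule core[OF n2 nz ev])
qed

end
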